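(* For every Young diagram $\mu$ with $m=|\mu|$ and every $n\ge1$, $$(T_n-\mathbf 1)(FS_\mu)_n=-\frac{m(m-1+zz')}{(n+1)(zz'+n)}(FS_\mu)_n+\frac{n+1-m}{(n+1)(zz'+n)}\sum_{\mu_\bullet\nearrow\mu}(z)_{\mu/\mu_\bullet}(z')_{\mu/\mu_\bullet}(FS_{\mu_\bullet})_n.$$
   Context: $\mathbb Y$ is the set of all Young diagrams (including $\varnothing$), $\mathbb Y_n$ those with $n$ boxes, $|\lambda|$ the number of boxes; $\mu\nearrow\lambda$ (equivalently $\lambda\searrow\mu$) means $\mu\subset\lambda$, $|\lambda|=|\mu|+1$. For a skew diagram $\theta$, $(z)_\theta=\prod_{(i,j)\in\theta}(z+j-i)$ ($(i,j)$ = box in row $i$, column $j$). $\dim\lambda$ is the number of standard Young tableaux of shape $\lambda$ ($\dim\varnothing=1$); $\dim(\mu,\lambda)$ is the number of chains $\mu\nearrow\cdots\nearrow\lambda$. Modified Frobenius coordinates: $\lambda=(a_1,\dots,a_d\mid b_1,\dots,b_d)$, $d$ the number of diagonal boxes, $a_i=\lambda_i-i+\frac12$, $b_i=\lambda'_i-i+\frac12$. $(z,z')$ is fixed in the principal series ($z\notin\mathbb R$, $z'=\bar z$) or complementary series ($z,z'\in(N,N+1)$, $N\in\mathbb Z$). Down transition $p^\downarrow(\nu,\lambda)=\dim\lambda/\dim\nu$ if $\lambda\nearrow\nu$, else 0; up transition for $\lambda\in\mathbb Y_n$: $p^\uparrow(\lambda,\nu)=\frac{(z)_{\nu/\lambda}(z')_{\nu/\lambda}}{zz'+n}\frac{\dim\nu}{(n+1)\dim\lambda}$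 if $\nu\searrow\lambda$, else 0. $T_n$ acts on real functions $g$ on $\mathbb Y_n$ by $(T_ng)(\lambda)=\sum_{\nu\in\mathbb Y_{n+1}}p^\uparrow(\lambda,\nu)\sum_{\tilde\lambda\in\mathbb Y_n}p^\downarrow(\nu,\tilde\lambda)g(\tilde\lambda)$; $\mathbf 1$ is the identity. $\Lambda=\mathbb R[p_1,p_2,\dots]$ (symmetric functions) is viewed as functions on $\mathbb Y$ via $p_k(\lambda)=\sum_ia_i^k+(-1)^{k-1}\sum_ib_i^k$; $f_n$ is the restriction of $f\in\Lambda$ to $\mathbb Y_n$. $FS_\mu\in\Lambda$ is the Frobenius–Schur function, characterized by $FS_\mu(\lambda)=n^{\downarrow m}\dim(\mu,\lambda)/\dim\lambda$ for all $\lambda$ ($n=|\lambda|$, $m=|\mu|$, $n^{\downarrow m}=n(n-1)\cdots(n-m+1)$). *)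

theory Defs
  imports Complex_Main
begin

definition young :: "nat list \<Rightarrow> bool" where
  "young la \<longleftrightarrow> sorted_wrt (\<ge>) la \<and> (\<forall>r \<in> set la. 0 < r)"

definition boxes :: "nat list \<Rightarrow> (nat \<times> nat) set" where
  "boxes la = {(i, j). 1 \<le> i \<and> i \<le> length la \<and> 1 \<le> j \<and> j \<le> la ! (i - 1)}"

definition ysize :: "nat list \<Rightarrow> nat" where
  "ysize la = sum_list la"

definition YD :: "nat \<Rightarrow> nat list set" where
  "YD n = {la. young la \<and> ysize la = n}"

definition nearrow :: "nat list \<Rightarrow> nat list \<Rightarrow> bool" where
  "nearrow mu la \<longleftrightarrow> young mu \<and> young la \<and> boxes mu \<subseteq> boxes la \<and> ysize la = ysize mu + 1"

definition cprod :: "complex \<Rightarrow> (nat \<times> nat) set \<Rightarrow> complex" where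
  "cprod z theta = (\<Prod>(i, j)\<in>theta. z + of_int (int j - int i))"

definition chains :: "nat list \<Rightarrow> nat list \<Rightarrow> nat list list set" where
  "chains mu la = {xs. xs \<noteq> [] \<and> hd xs = mu \<and> last xs = la \<and> (\<forall>x\<in>set xs. young x) \<and>
      (\<forall>i. i + 1 < length xs \<longrightarrow> nearrow (xs ! i) (xs ! (i + 1)))}"

definition dimrel :: "nat list \<Rightarrow> nat list \<Rightarrow> nat" where
  "dimrel mu la = card (chains mu la)"

definition ydim :: "nat list \<Rightarrow> nat" where
  "ydim la = dimrel [] la"

definition falling :: "nat \<Rightarrow> nat \<Rightarrow> complex" where
  "falling n m = (\<Prod>i<m. of_nat n - of_nat i)"

definition FS :: "nat list \<Rightarrow> nat list \<Rightarrow> complex" where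
  "FS mu la = falling (ysize la) (ysize mu) * of_nat (dimrel mu la) / of_nat (ydim la)"

definition pdown :: "nat list \<Rightarrow> nat list \<Rightarrow> complex" where
  "pdown nu la = (if nearrow la nu then of_nat (ydim la) / of_nat (ydim nu) else 0)"

definition pup :: "complex \<Rightarrow> complex \<Rightarrow> nat list \<Rightarrow> nat list \<Rightarrow> complex" where
  "pup z z' la nu = (if nearrow la nu then
      cprod z (boxes nu - boxes la) * cprod z' (boxes nu - boxes la) / (z * z' + of_nat (ysize la))
      * of_nat (ydim nu) / (of_nat (ysize la + 1) * of_nat (ydim la)) else 0)"

definition Top :: "complex \<Rightarrow> complex \<Rightarrow> nat \<Rightarrow> (nat list \<Rightarrow> complex) \<Rightarrow> nat list \<Rightarrow> complex" where
  "Top z z' n g la = (\<Sum>nu\<in>YD (n + 1). pup z z' la nu * (\<Sum>la'\<in>YD n. pdown nu la' * g la'))"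

definition admissible :: "complex \<Rightarrow> complex \<Rightarrow> bool" where
  "admissible z z' \<longleftrightarrow> (z \<notin> \<real> \<and> z' = cnj z) \<or>
     (\<exists>N::int. z \<in> \<real> \<and> z' \<in> \<real> \<and> of_int N < Re z \<and> Re z < of_int N + 1
                \<and> of_int N < Re z' \<and> Re z' < of_int N + 1)"

end

theory Submission
  imports Defs
begin



lemma young_pos: "young la \<Longrightarrow> i < length la \<Longrightarrow> 0 < la ! i"
  by (auto simp: young_def)

lemma young_mono: "young la \<Longrightarrow> i \<le> j \<Longrightarrow> j < length la \<Longrightarrow> la ! j \<le> la ! i"
  unfolding young_def sorted_wrt_iff_nth_less
  by (metis le_eq_less_or_eq)

lemma young_iff: "young la \<longleftrightarrow> (\<forall>i<length la. 0 < la ! i) \<and> (\<forall>i j. i \<le> j \<longrightarrow> j < length la \<longrightarrow> la ! j \<le> la ! i)"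
  unfolding young_def sorted_wrt_iff_nth_less
  by (auto simp: in_set_conv_nth) (metis le_eq_less_or_eq order_refl)

lemma boxes_mem: "(i, j) \<in> boxes la \<longleftrightarrow> 1 \<le> i \<and> i \<le> length la \<and> 1 \<le> j \<and> j \<le> la ! (i - 1)"
  by (simp add: boxes_def)

lemma boxes_eq: "boxes la = (\<lambda>(i, j). (i + 1, j)) ` (SIGMA i:{..<length la}. {1..la ! i})"
  unfolding boxes_def by (force simp: image_iff)

lemma finite_boxes[simp]: "finite (boxes la)"
  unfolding boxes_eq by auto

lemma card_boxes: "card (boxes la) = ysize la"
proof -
  have "inj_on (\<lambda>(i::nat, j::nat). (i + 1, j)) X" for X by (auto simp: inj_on_def)
  then have "card (boxes la) = card (SIGMA i:{..<length la}. {1..la ! i})"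
    unfolding boxes_eq by (simp add: card_image)
  also have "\<dots> = (\<Sum>i<length la. la ! i)" by (simp add: card_SigmaI)
  also have "\<dots> = ysize la" unfolding ysize_def by (simp add: sum_list_sum_nth atLeast0LessThan)
  finally show ?thesis .
qed

lemma boxes_down: "young la \<Longrightarrow> (i, j) \<in> boxes la \<Longrightarrow> 1 \<le> i' \<Longrightarrow> i' \<le> i \<Longrightarrow> 1 \<le> j' \<Longrightarrow> j' \<le> j
   \<Longrightarrow> (i', j') \<in> boxes la"
  unfolding boxes_mem using young_mono[of la "i' - 1" "i - 1"] by force

lemma young_len_iff: "young la \<Longrightarrow> (i + 1 \<le> length la) \<longleftrightarrow> (i + 1, 1) \<in> boxes la"
  unfolding boxes_mem using young_pos[of la i] by auto

lemma boxes_inj: assumes "young a" "young b" "boxes a = boxes b" shows "a = b"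
proof (rule nth_equalityI)
  have "length a \<le> length b"
    using young_len_iff[OF assms(1), of "length a - 1"] young_len_iff[OF assms(2), of "length a - 1"] assms(3)
    by (cases "length a") auto
  moreover have "length b \<le> length a"
    using young_len_iff[OF assms(1), of "length b - 1"] young_len_iff[OF assms(2), of "length b - 1"] assms(3)
    by (cases "length b") auto
  ultimately show "length a = length b" by simp
  fix i assume i: "i < length a"
  then have "(i + 1, a ! i) \<in> boxes a" using young_pos[OF assms(1) i] by (simp add: boxes_mem)
  then have "(i + 1, a ! i) \<in> boxes b" using assms(3) by simp
  moreover have "(i + 1, b ! i) \<in> boxes b" using young_pos[OF assms(2), of i] i \<open>length a = length b\<close>
    by (simp add: boxes_mem)
  then have "(i + 1, b ! i) \<in> boxes a" using assms(3) by simp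
  ultimately show "a ! i = b ! i" by (auto simp: boxes_mem)
qed




definition rr :: "nat list \<Rightarrow> nat \<Rightarrow> nat" where
  "rr a i = (if i < length a then a ! i else 0)"

definition meetl :: "nat list \<Rightarrow> nat list \<Rightarrow> nat list" where
  "meetl a b = map (\<lambda>i. min (a ! i) (b ! i)) [0..<min (length a) (length b)]"

definition joinl :: "nat list \<Rightarrow> nat list \<Rightarrow> nat list" where
  "joinl a b = map (\<lambda>i. max (rr a i) (rr b i)) [0..<max (length a) (length b)]"

lemma length_meetl[simp]: "length (meetl a b) = min (length a) (length b)"
  by (simp add: meetl_def)
lemma nth_meetl[simp]: "i < length a \<Longrightarrow> i < length b \<Longrightarrow> meetl a b ! i = min (a ! i) (b ! i)"
  by (simp add: meetl_def)
lemma length_joinl[simp]: "length (joinl a b) = max (length a) (length b)"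
  by (simp add: joinl_def)
lemma nth_joinl[simp]: "i < length a \<or> i < length b \<Longrightarrow> joinl a b ! i = max (rr a i) (rr b i)"
  unfolding joinl_def by (subst nth_map) (auto simp: max_def)

lemma young_rr_mono: "young a \<Longrightarrow> i \<le> j \<Longrightarrow> rr a j \<le> rr a i"
  unfolding rr_def using young_mono[of a i j] by auto

lemma boxes_rr: "young a \<Longrightarrow> (i, j) \<in> boxes a \<longleftrightarrow> 1 \<le> i \<and> 1 \<le> j \<and> j \<le> rr a (i - 1)"
  unfolding boxes_mem rr_def using young_pos[of a "i - 1"] by auto

lemma rr_meetl: "rr (meetl a b) k = min (rr a k) (rr b k)"
  by (simp add: rr_def)

lemma rr_joinl: "rr (joinl a b) k = max (rr a k) (rr b k)"
proof (cases "k < length a \<or> k < length b")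
  case True
  then show ?thesis using nth_joinl[OF True] by (auto simp: rr_def[of "joinl a b"])
next
  case False
  then show ?thesis by (simp add: rr_def max_def)
qed

lemma young_meetl: "young a \<Longrightarrow> young b \<Longrightarrow> young (meetl a b)"
  unfolding young_iff by (auto intro: min.mono simp: min_le_iff_disj)

lemma young_joinl: assumes "young a" "young b" shows "young (joinl a b)"
  unfolding young_iff
proof safe
  fix i assume "i < length (joinl a b)"
  then have "i < length a \<or> i < length b" by auto
  then show "0 < joinl a b ! i"
    using young_pos[OF assms(1), of i] young_pos[OF assms(2), of i]
    by (auto simp: rr_def max_def)
next
  fix i j assume "i \<le> j" "j < length (joinl a b)"
  then have "i < length a \<or> i < length b" "j < length a \<or> j < length b" by auto
  then show "joinl a b ! j \<le> joinl a b ! i"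
    using young_rr_mono[OF assms(1) \<open>i \<le> j\<close>] young_rr_mono[OF assms(2) \<open>i \<le> j\<close>]
    by (auto intro: max.mono)
qed

lemma boxes_meetl: assumes "young a" "young b" shows "boxes (meetl a b) = boxes a \<inter> boxes b"
proof -
  have "x \<in> boxes (meetl a b) \<longleftrightarrow> x \<in> boxes a \<inter> boxes b" for x
    using young_meetl[OF assms] assms by (cases x) (auto simp: boxes_rr rr_meetl)
  then show ?thesis by blast
qed

lemma boxes_joinl: assumes "young a" "young b" shows "boxes (joinl a b) = boxes a \<union> boxes b"
proof -
  have "x \<in> boxes (joinl a b) \<longleftrightarrow> x \<in> boxes a \<union> boxes b" for x
    using young_joinl[OF assms] assms by (cases x) (auto simp: boxes_rr rr_joinl le_max_iff_disj)
  then show ?thesis by blast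
qed

lemma nearrow_card: "nearrow mu la \<longleftrightarrow> young mu \<and> young la \<and> boxes mu \<subseteq> boxes la \<and> card (boxes la) = card (boxes mu) + 1"
  unfolding nearrow_def card_boxes by simp

lemma nearrow_insert: assumes "nearrow mu la" obtains b where "b \<notin> boxes mu" "boxes la = insert b (boxes mu)"
proof -
  from assms have s: "boxes mu \<subseteq> boxes la" and c: "card (boxes la) = card (boxes mu) + 1"
    by (auto simp: nearrow_card)
  then have "card (boxes la - boxes mu) = 1" by (simp add: card_Diff_subset)
  then obtain b where "boxes la - boxes mu = {b}" by (auto simp: card_Suc_eq)
  then show ?thesis using that s by blast
qed

lemma nearrow_neq: "nearrow mu la \<Longrightarrow> mu \<noteq> la"
  by (auto simp: nearrow_def)




lemma finite_YD: "finite (YD n)"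
proof -
  have "YD n \<subseteq> {xs. set xs \<subseteq> {..n} \<and> length xs \<le> n}"
  proof
    fix xs assume "xs \<in> YD n"
    then have y: "young xs" and s: "sum_list xs = n" by (auto simp: YD_def ysize_def)
    have "set xs \<subseteq> {..n}" using s member_le_sum_list by fastforce
    moreover have "length xs \<le> sum_list xs"
      using y unfolding young_def
    proof (induction xs)
      case (Cons a xs) then show ?case by auto
    qed simp
    ultimately show "xs \<in> {xs. set xs \<subseteq> {..n} \<and> length xs \<le> n}" using s by auto
  qed
  then show ?thesis by (rule finite_subset) (auto intro: finite_lists_length_le)
qed

lemma nearrow_ysize: "nearrow mu la \<Longrightarrow> ysize la = ysize mu + 1"
  by (simp add: nearrow_def)

lemma finite_up: "finite {nu. nearrow la nu}"
  by (rule finite_subset[OF _ finite_YD[of "ysize la + 1"]]) (auto simp: nearrow_def YD_def)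

lemma finite_down: "finite {mu. nearrow mu la}"
  by (rule finite_subset[OF _ finite_YD[of "ysize la - 1"]]) (auto simp: nearrow_def YD_def)

lemma chain_size: assumes "xs \<in> chains mu la" "i < length xs" shows "ysize (xs ! i) = ysize mu + i"
  using assms(2)
proof (induction i)
  case 0
  then show ?case using assms(1) by (auto simp: chains_def hd_conv_nth)
next
  case (Suc i)
  then have "nearrow (xs ! i) (xs ! (i + 1))" using assms(1) by (auto simp: chains_def)
  then show ?case using Suc by (auto simp: nearrow_def)
qed

lemma chain_last_size: assumes "xs \<in> chains mu la" shows "ysize la = ysize mu + (length xs - 1)"
proof -
  have "xs \<noteq> []" "last xs = la" using assms by (auto simp: chains_def)
  then show ?thesis using chain_size[OF assms, of "length xs - 1"] by (simp add: last_conv_nth)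
qed

lemma chains_self: assumes "young mu" shows "chains mu mu = {[mu]}"
proof
  show "chains mu mu \<subseteq> {[mu]}"
  proof
    fix xs assume a: "xs \<in> chains mu mu"
    then have "length xs - 1 = 0" using chain_last_size[OF a] by simp
    then have "length xs = 1" using a by (cases xs) (auto simp: chains_def)
    then show "xs \<in> {[mu]}" using a by (cases xs) (auto simp: chains_def)
  qed
  show "{[mu]} \<subseteq> chains mu mu" using assms by (auto simp: chains_def)
qed

lemma dimrel_self: "young mu \<Longrightarrow> dimrel mu mu = 1"
  by (simp add: dimrel_def chains_self)

lemma chains_empty: assumes "ysize la \<le> ysize mu" "la \<noteq> mu" shows "chains mu la = {}"
proof (rule ccontr)
  assume "chains mu la \<noteq> {}"
  then obtain xs where a: "xs \<in> chains mu la" by auto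
  then have "length xs - 1 = 0" using chain_last_size[OF a] assms by simp
  then have "length xs = 1" using a by (cases xs) (auto simp: chains_def)
  then show False using a assms(2) by (cases xs) (auto simp: chains_def)
qed

lemma dimrel_zero: "ysize la \<le> ysize mu \<Longrightarrow> la \<noteq> mu \<Longrightarrow> dimrel mu la = 0"
  by (simp add: dimrel_def chains_empty)

lemma finite_chains: "finite (chains mu la)"
proof -
  let ?A = "{x. young x \<and> ysize x \<le> ysize la}"
  have fA: "finite ?A"
    by (rule finite_subset[of _ "\<Union>k\<le>ysize la. YD k"]) (use finite_YD in \<open>auto simp: YD_def\<close>)
  have "chains mu la \<subseteq> {xs. set xs \<subseteq> ?A \<and> length xs \<le> ysize la + 1}"
  proof
    fix xs assume a: "xs \<in> chains mu la"
    have "set xs \<subseteq> ?A"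
    proof
      fix x assume "x \<in> set xs"
      then obtain i where "i < length xs" "x = xs ! i" by (auto simp: in_set_conv_nth)
      then show "x \<in> ?A" using chain_size[OF a, of i] chain_last_size[OF a] a
        by (auto simp: chains_def)
    qed
    then show "xs \<in> {xs. set xs \<subseteq> ?A \<and> length xs \<le> ysize la + 1}"
      using chain_last_size[OF a] by auto
  qed
  then show ?thesis by (rule finite_subset) (intro finite_lists_length_le fA)
qed

lemma chains_rec: assumes "young la" "ysize mu < ysize la"
  shows "chains mu la = (\<lambda>xs. xs @ [la]) ` (\<Union>rho\<in>{rho. nearrow rho la}. chains mu rho)"
proof
  show "chains mu la \<subseteq> (\<lambda>xs. xs @ [la]) ` (\<Union>rho\<in>{rho. nearrow rho la}. chains mu rho)"
  proof
    fix xs assume a: "xs \<in> chains mu la"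
    have l2: "length xs \<ge> 2" using chain_last_size[OF a] assms(2) by linarith
    define ys where "ys = butlast xs"
    have xs: "xs = ys @ [la]" using a unfolding ys_def chains_def by (auto intro: append_butlast_last_id[symmetric])
    have ly: "length ys = length xs - 1" by (simp add: ys_def)
    have yn: "\<And>i. i < length ys \<Longrightarrow> ys ! i = xs ! i" unfolding xs by (simp add: nth_append)
    have ne: "ys \<noteq> []" using l2 ly by auto
    have al: "\<forall>i. i + 1 < length xs \<longrightarrow> nearrow (xs ! i) (xs ! (i + 1))"
      using a unfolding chains_def by blast
    then have "nearrow (xs ! (length xs - 2)) (xs ! (length xs - 2 + 1))"
      using l2 by (intro mp[OF spec[OF al]]) linarith
    moreover have "length xs - 2 + 1 = length xs - 1" using l2 by simp
    ultimately have "nearrow (xs ! (length xs - 2)) (xs ! (length xs - 1))" by simp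
    moreover have "xs ! (length xs - 1) = la" unfolding xs by (simp add: nth_append)
    moreover have "xs ! (length xs - 2) = last ys"
    proof -
      have "length xs - 2 < length ys" using ly l2 by simp
      then have "ys ! (length xs - 2) = xs ! (length xs - 2)" by (rule yn)
      moreover have "length ys - 1 = length xs - 2" using ly by simp
      ultimately show ?thesis using ne by (simp add: last_conv_nth)
    qed
    ultimately have n: "nearrow (last ys) la" by simp
    have "ys \<in> chains mu (last ys)"
      unfolding chains_def
    proof (intro CollectI conjI allI impI ballI)
      show "ys \<noteq> []" by (rule ne)
      show "hd ys = mu" using a ne unfolding xs chains_def by simp
      show "last ys = last ys" ..
      fix x assume "x \<in> set ys" then show "young x" using a unfolding xs chains_def by simp
    next
      fix i assume i: "i + 1 < length ys"
      then have "nearrow (xs ! i) (xs ! (i + 1))" using a ly unfolding chains_def by simp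
      then show "nearrow (ys ! i) (ys ! (i + 1))" using yn i by simp
    qed
    then show "xs \<in> (\<lambda>xs. xs @ [la]) ` (\<Union>rho\<in>{rho. nearrow rho la}. chains mu rho)"
      using n xs by blast
  qed
  show "(\<lambda>xs. xs @ [la]) ` (\<Union>rho\<in>{rho. nearrow rho la}. chains mu rho) \<subseteq> chains mu la"
  proof safe
    fix rho ys assume n: "nearrow rho la" and c: "ys \<in> chains mu rho"
    show "ys @ [la] \<in> chains mu la"
      unfolding chains_def
    proof (intro CollectI conjI allI impI ballI)
      show "ys @ [la] \<noteq> []" by simp
      show "hd (ys @ [la]) = mu" using c by (auto simp: chains_def)
      show "last (ys @ [la]) = la" by simp
      fix x assume "x \<in> set (ys @ [la])" then show "young x" using c assms(1) by (auto simp: chains_def)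
    next
      fix i assume i: "i + 1 < length (ys @ [la])"
      show "nearrow ((ys @ [la]) ! i) ((ys @ [la]) ! (i + 1))"
      proof (cases "i + 1 < length ys")
        case True then show ?thesis using c by (auto simp: chains_def nth_append)
      next
        case False
        then have "i + 1 = length ys" using i by simp
        moreover have "ys ! (length ys - 1) = rho" using c by (auto simp: chains_def last_conv_nth)
        moreover have "length ys - 1 = i" using \<open>i + 1 = length ys\<close> by simp
        ultimately show ?thesis using n by (auto simp: nth_append)
      qed
    qed
  qed
qed

lemma dimrel_rec: assumes "young la" "ysize mu < ysize la"
  shows "dimrel mu la = (\<Sum>rho\<in>{rho. nearrow rho la}. dimrel mu rho)"
proof -
  have "dimrel mu la = card (\<Union>rho\<in>{rho. nearrow rho la}. chains mu rho)"
    unfolding dimrel_def chains_rec[OF assms] by (rule card_image) (auto simp: inj_on_def)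
  also have "\<dots> = (\<Sum>rho\<in>{rho. nearrow rho la}. card (chains mu rho))"
    by (rule card_UN_disjoint) (use finite_down finite_chains in \<open>auto simp: chains_def\<close>)
  finally show ?thesis by (simp add: dimrel_def)
qed




lemma young_adj: "young a \<longleftrightarrow> (\<forall>k<length a. 0 < a ! k) \<and> (\<forall>k. Suc k < length a \<longrightarrow> a ! Suc k \<le> a ! k)"
proof -
  have t: "transp ((\<ge>) :: nat \<Rightarrow> nat \<Rightarrow> bool)" by (auto simp: transp_def)
  show ?thesis unfolding young_def sorted_wrt_iff_nth_Suc_transp[OF t]
    by (auto simp: in_set_conv_nth)
qed

lemma young_rr: "young a \<longleftrightarrow> (\<forall>k<length a. 0 < rr a k) \<and> (\<forall>k. rr a (Suc k) \<le> rr a k)"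
  unfolding young_adj rr_def
proof (intro iffI conjI allI impI; (elim conjE)?)
  fix k assume "\<forall>k. Suc k < length a \<longrightarrow> a ! Suc k \<le> a ! k"
  then show "(if Suc k < length a then a ! Suc k else 0) \<le> (if k < length a then a ! k else 0)"
    using Suc_lessD by auto
next
  fix k assume "\<forall>k. (if Suc k < length a then a ! Suc k else 0) \<le> (if k < length a then a ! k else 0)"
    "Suc k < length a"
  then show "a ! Suc k \<le> a ! k" by (metis Suc_lessD)
qed auto

definition addl :: "nat list \<Rightarrow> nat \<Rightarrow> nat list" where
  "addl la i = (if i < length la then la[i := la ! i + 1] else la @ [1])"

definition AddIdx :: "nat list \<Rightarrow> nat set" where
  "AddIdx la = {i. i \<le> length la \<and> (i = 0 \<or> rr la i < rr la (i - 1))}"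

definition reml :: "nat list \<Rightarrow> nat \<Rightarrow> nat list" where
  "reml la i = (if la ! i = 1 then take i la else la[i := la ! i - 1])"

definition RemIdx :: "nat list \<Rightarrow> nat set" where
  "RemIdx la = {i. i < length la \<and> rr la (i + 1) < la ! i}"

lemma rr_beyond: "length a \<le> k \<Longrightarrow> rr a k = 0"
  by (simp add: rr_def)

lemma rr_addl: assumes "i \<le> length la"
  shows "rr (addl la i) k = (if k = i then rr la i + 1 else rr la k)"
  using assms unfolding addl_def rr_def by (auto simp: nth_append)

lemma length_addl: "i \<le> length la \<Longrightarrow> length (addl la i) = (if i < length la then length la else length la + 1)"
  by (simp add: addl_def)

lemma young_addl: assumes y: "young la" and i: "i \<in> AddIdx la" shows "young (addl la i)"
proof -
  have il: "i \<le> length la" using i by (simp add: AddIdx_def)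
  have pos: "\<forall>k<length la. 0 < rr la k" and mono: "\<forall>k. rr la (Suc k) \<le> rr la k"
    using y by (auto simp: young_rr)
  show ?thesis unfolding young_rr
  proof (intro conjI allI impI)
    fix k assume "k < length (addl la i)"
    then show "0 < rr (addl la i) k" using pos il by (auto simp: rr_addl length_addl split: if_splits)
  next
    fix k
    show "rr (addl la i) (Suc k) \<le> rr (addl la i) k"
      using mono[rule_format, of k] i il by (auto simp: rr_addl AddIdx_def)
  qed
qed

lemma boxes_addl: assumes y: "young la" and i: "i \<in> AddIdx la"
  shows "boxes (addl la i) = insert (i + 1, rr la i + 1) (boxes la)"
proof -
  have il: "i \<le> length la" using i by (simp add: AddIdx_def)
  have y2: "young (addl la i)" using young_addl[OF y i] .
  have "x \<in> boxes (addl la i) \<longleftrightarrow> x \<in> insert (i + 1, rr la i + 1) (boxes la)" for x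
    by (cases x) (auto simp: boxes_rr[OF y2] boxes_rr[OF y] rr_addl[OF il])
  then show ?thesis by blast
qed

lemma nearrow_addl: assumes y: "young la" and i: "i \<in> AddIdx la" shows "nearrow la (addl la i)"
proof -
  have "(i + 1, rr la i + 1) \<notin> boxes la" by (simp add: boxes_rr[OF y])
  then show ?thesis unfolding nearrow_card using boxes_addl[OF y i] young_addl[OF y i] y by auto
qed




lemma up_addl: assumes y: "young la" and n: "nearrow la nu"
  shows "\<exists>i\<in>AddIdx la. nu = addl la i"
proof -
  obtain b where b: "b \<notin> boxes la" "boxes nu = insert b (boxes la)" using nearrow_insert[OF n] .
  obtain p q where pq: "b = (p, q)" by (cases b)
  have yn: "young nu" using n by (simp add: nearrow_def)
  have bn: "(p, q) \<in> boxes nu" using b pq by auto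
  then have p1: "1 \<le> p" and q1: "1 \<le> q" by (auto simp: boxes_rr[OF yn])
  define i where "i = p - 1"
  have p: "p = i + 1" using p1 i_def by simp
  have qgt: "rr la i < q" using b pq p q1 by (simp add: boxes_rr[OF y])
  have qle: "q - 1 \<le> rr la i"
  proof (cases "q \<ge> 2")
    case True
    then have "(p, q - 1) \<in> boxes nu" using boxes_down[OF yn bn] p1 by simp
    moreover have "(p, q - 1) \<noteq> b" using pq True by simp
    ultimately have "(p, q - 1) \<in> boxes la" using b by auto
    then show ?thesis by (simp add: boxes_rr[OF y] p)
  qed (use q1 in simp)
  have q: "q = rr la i + 1" using qgt qle by simp
  have il: "i \<le> length la"
  proof (rule ccontr)
    assume "\<not> i \<le> length la"
    then have "(length la + 1, 1) \<in> boxes nu" using boxes_down[OF yn bn, of "length la + 1" 1] p q1 by simp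
    moreover have "(length la + 1, 1) \<notin> boxes la" by (simp add: boxes_rr[OF y] rr_beyond)
    moreover have "(length la + 1, 1) \<noteq> b" using pq p \<open>\<not> i \<le> length la\<close> by simp
    ultimately show False using b by auto
  qed
  have iA: "i \<in> AddIdx la"
  proof (cases "i = 0")
    case False
    then have "(p - 1, q) \<in> boxes nu" using boxes_down[OF yn bn, of "p - 1" q] p q1 by simp
    moreover have "(p - 1, q) \<noteq> b" using pq p by simp
    ultimately have "(p - 1, q) \<in> boxes la" using b by auto
    then have "q \<le> rr la (i - 1)" using p by (simp add: boxes_rr[OF y])
    then show ?thesis using il q by (simp add: AddIdx_def)
  qed (simp add: AddIdx_def)
  have "boxes nu = boxes (addl la i)" using b pq p q boxes_addl[OF y iA] by simp
  then have "nu = addl la i" using boxes_inj[OF yn young_addl[OF y iA]] by simp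
  then show ?thesis using iA by blast
qed

lemma up_set: assumes y: "young la" shows "{nu. nearrow la nu} = addl la ` AddIdx la"
proof
  show "{nu. nearrow la nu} \<subseteq> addl la ` AddIdx la"
  proof
    fix nu assume "nu \<in> {nu. nearrow la nu}"
    then obtain i where "i \<in> AddIdx la" "nu = addl la i" using up_addl[OF y] by auto
    then show "nu \<in> addl la ` AddIdx la" by (rule rev_image_eqI)
  qed
  show "addl la ` AddIdx la \<subseteq> {nu. nearrow la nu}" using nearrow_addl[OF y] by auto
qed

lemma addl_inj: assumes y: "young la" shows "inj_on (addl la) (AddIdx la)"
proof
  fix i j assume i: "i \<in> AddIdx la" and j: "j \<in> AddIdx la" and e: "addl la i = addl la j"
  have ni: "(i + 1, rr la i + 1) \<notin> boxes la" "(j + 1, rr la j + 1) \<notin> boxes la"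
    by (simp_all add: boxes_rr[OF y])
  have "{(i + 1, rr la i + 1)} = boxes (addl la i) - boxes la"
    unfolding boxes_addl[OF y i] using ni by blast
  also have "\<dots> = boxes (addl la j) - boxes la" by (simp only: e)
  also have "\<dots> = {(j + 1, rr la j + 1)}"
    unfolding boxes_addl[OF y j] using ni by blast
  finally show "i = j" by simp
qed




lemma rr_reml: assumes y: "young la" and i: "i \<in> RemIdx la"
  shows "rr (reml la i) k = (if k = i then la ! i - 1 else rr la k)"
proof -
  have il: "i < length la" and g: "rr la (i + 1) < la ! i" using i by (auto simp: RemIdx_def)
  show ?thesis
  proof (cases "la ! i = 1")
    case True
    then have "rr la (i + 1) = 0" using g by simp
    then have "length la \<le> i + 1" using young_pos[OF y, of "i + 1"] by (auto simp: rr_def split: if_splits)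
    then have "length la = i + 1" using il by simp
    then show ?thesis using True il unfolding reml_def rr_def by auto
  next
    case False
    then show ?thesis using il unfolding reml_def rr_def by auto
  qed
qed

lemma length_reml: assumes y: "young la" and i: "i \<in> RemIdx la"
  shows "length (reml la i) \<le> length la" "k < length (reml la i) \<Longrightarrow> 0 < rr (reml la i) k"
proof -
  have il: "i < length la" and g: "rr la (i + 1) < la ! i" using i by (auto simp: RemIdx_def)
  show "length (reml la i) \<le> length la" by (simp add: reml_def)
  assume k: "k < length (reml la i)"
  show "0 < rr (reml la i) k"
  proof (cases "la ! i = 1")
    case True
    then show ?thesis using k young_pos[OF y, of k] by (auto simp: reml_def rr_def)
  next
    case False
    then show ?thesis using k young_pos[OF y, of k] il by (auto simp: reml_def rr_def nth_list_update)
  qed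
qed

lemma young_reml: assumes y: "young la" and i: "i \<in> RemIdx la" shows "young (reml la i)"
proof -
  have il: "i < length la" and g: "rr la (i + 1) < la ! i" using i by (auto simp: RemIdx_def)
  have mono: "\<forall>k. rr la (Suc k) \<le> rr la k" using y by (auto simp: young_rr)
  show ?thesis unfolding young_rr
  proof (intro conjI allI impI)
    fix k assume "k < length (reml la i)"
    then show "0 < rr (reml la i) k" by (rule length_reml(2)[OF y i])
  next
    fix k
    show "rr (reml la i) (Suc k) \<le> rr (reml la i) k"
    proof -
      have ri: "rr la i = la ! i" using il by (simp add: rr_def)
      show ?thesis
        using mono[rule_format, of k] g ri unfolding rr_reml[OF y i] by auto
    qed
  qed
qed

lemma boxes_reml: assumes y: "young la" and i: "i \<in> RemIdx la"
  shows "boxes la = insert (i + 1, la ! i) (boxes (reml la i))" "(i + 1, la ! i) \<notin> boxes (reml la i)"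
proof -
  have il: "i < length la" using i by (simp add: RemIdx_def)
  have p: "0 < la ! i" using young_pos[OF y il] .
  have y2: "young (reml la i)" using young_reml[OF y i] .
  have ri: "rr la i = la ! i" using il by (simp add: rr_def)
  have "x \<in> boxes la \<longleftrightarrow> x \<in> insert (i + 1, la ! i) (boxes (reml la i))" for x
    using p ri by (cases x) (auto simp: boxes_rr[OF y2] boxes_rr[OF y] rr_reml[OF y i])
  then show "boxes la = insert (i + 1, la ! i) (boxes (reml la i))" by blast
  show "(i + 1, la ! i) \<notin> boxes (reml la i)" using p by (simp add: boxes_rr[OF y2] rr_reml[OF y i])
qed

lemma nearrow_reml: assumes y: "young la" and i: "i \<in> RemIdx la" shows "nearrow (reml la i) la"
  unfolding nearrow_card using boxes_reml[OF y i] young_reml[OF y i] y by auto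

lemma down_reml: assumes y: "young la" and n: "nearrow rho la"
  shows "\<exists>i\<in>RemIdx la. rho = reml la i"
proof -
  obtain b where b: "b \<notin> boxes rho" "boxes la = insert b (boxes rho)" using nearrow_insert[OF n] .
  obtain p q where pq: "b = (p, q)" by (cases b)
  have yr: "young rho" using n by (simp add: nearrow_def)
  have bl: "(p, q) \<in> boxes la" using b pq by auto
  then have p1: "1 \<le> p" and q1: "1 \<le> q" and qle: "q \<le> rr la (p - 1)" by (auto simp: boxes_rr[OF y])
  define i where "i = p - 1"
  have p: "p = i + 1" using p1 i_def by simp
  have il: "i < length la" using qle q1 p by (auto simp: rr_def split: if_splits)
  have q: "q = la ! i"
  proof (rule ccontr)
    assume "q \<noteq> la ! i"
    then have "(p, q + 1) \<in> boxes la" using qle il p q1 by (simp add: boxes_rr[OF y] rr_def)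
    moreover have "(p, q + 1) \<noteq> b" using pq by simp
    ultimately have "(p, q + 1) \<in> boxes rho" using b by auto
    then have "(p, q) \<in> boxes rho" using boxes_down[OF yr, of p "q + 1" p q] p1 q1 by simp
    then show False using b pq by simp
  qed
  have g: "rr la (i + 1) < la ! i"
  proof (rule ccontr)
    assume "\<not> rr la (i + 1) < la ! i"
    then have "(p + 1, q) \<in> boxes la" using q q1 p by (simp add: boxes_rr[OF y])
    moreover have "(p + 1, q) \<noteq> b" using pq by simp
    ultimately have "(p + 1, q) \<in> boxes rho" using b by auto
    then have "(p, q) \<in> boxes rho" using boxes_down[OF yr, of "p + 1" q p q] p1 q1 by simp
    then show False using b pq by simp
  qed
  have iR: "i \<in> RemIdx la" using il g by (simp add: RemIdx_def)
  have "boxes rho = boxes (reml la i)"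
    using b pq p q boxes_reml[OF y iR] by (metis insert_ident)
  then have "rho = reml la i" using boxes_inj[OF yr young_reml[OF y iR]] by simp
  then show ?thesis using iR by blast
qed

lemma down_set: assumes y: "young la" shows "{rho. nearrow rho la} = reml la ` RemIdx la"
proof
  show "{rho. nearrow rho la} \<subseteq> reml la ` RemIdx la"
  proof
    fix nu assume "nu \<in> {nu. nearrow nu la}"
    then obtain i where "i \<in> RemIdx la" "nu = reml la i" using down_reml[OF y] by auto
    then show "nu \<in> reml la ` RemIdx la" by (rule rev_image_eqI)
  qed
  show "reml la ` RemIdx la \<subseteq> {nu. nearrow nu la}" using nearrow_reml[OF y] by auto
qed

lemma reml_inj: assumes y: "young la" shows "inj_on (reml la) (RemIdx la)"
proof
  fix i j assume i: "i \<in> RemIdx la" and j: "j \<in> RemIdx la" and e: "reml la i = reml la j"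
  have "{(i + 1, la ! i)} = boxes la - boxes (reml la i)"
    using boxes_reml[OF y i] by blast
  also have "\<dots> = boxes la - boxes (reml la j)" by (simp only: e)
  also have "\<dots> = {(j + 1, la ! j)}"
    using boxes_reml[OF y j] by blast
  finally show "i = j" by simp
qed




lemma up_sum: assumes y: "young la"
  shows "(\<Sum>nu\<in>{nu. nearrow la nu}. f (boxes nu - boxes la)) = (\<Sum>i\<in>AddIdx la. f {(i + 1, rr la i + 1)})"
proof -
  have "(\<Sum>nu\<in>{nu. nearrow la nu}. f (boxes nu - boxes la)) = (\<Sum>i\<in>AddIdx la. f (boxes (addl la i) - boxes la))"
    unfolding up_set[OF y] by (rule sum.reindex[OF addl_inj[OF y], unfolded comp_def])
  also have "\<dots> = (\<Sum>i\<in>AddIdx la. f {(i + 1, rr la i + 1)})"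
  proof (rule sum.cong[OF refl])
    fix i assume i: "i \<in> AddIdx la"
    have ni: "(i + 1, rr la i + 1) \<notin> boxes la" by (simp add: boxes_rr[OF y])
    have "boxes (addl la i) - boxes la = {(i + 1, rr la i + 1)}"
      unfolding boxes_addl[OF y i] using ni by blast
    then show "f (boxes (addl la i) - boxes la) = f {(i + 1, rr la i + 1)}" by (simp only:)
  qed
  finally show ?thesis .
qed

lemma down_sum: assumes y: "young la"
  shows "(\<Sum>rho\<in>{rho. nearrow rho la}. f (boxes la - boxes rho)) = (\<Sum>i\<in>RemIdx la. f {(i + 1, la ! i)})"
proof -
  have "(\<Sum>rho\<in>{rho. nearrow rho la}. f (boxes la - boxes rho)) = (\<Sum>i\<in>RemIdx la. f (boxes la - boxes (reml la i)))"
    unfolding down_set[OF y] by (rule sum.reindex[OF reml_inj[OF y], unfolded comp_def])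
  also have "\<dots> = (\<Sum>i\<in>RemIdx la. f {(i + 1, la ! i)})"
  proof (rule sum.cong[OF refl])
    fix i assume i: "i \<in> RemIdx la"
    have "boxes la - boxes (reml la i) = {(i + 1, la ! i)}"
      using boxes_reml[OF y i] by blast
    then show "f (boxes la - boxes (reml la i)) = f {(i + 1, la ! i)}" by (simp only:)
  qed
  finally show ?thesis .
qed

lemma telescope:
  fixes W :: "int \<Rightarrow> complex"
  assumes y: "young la"
  shows "(\<Sum>i\<in>AddIdx la. W (int (rr la i) - int i)) - (\<Sum>i\<in>RemIdx la. W (int (la ! i) - int i - 1))
       = W (- int (length la)) + (\<Sum>i<length la. W (int (la ! i) - int i) - W (int (la ! i) - int i - 1))"
proof -
  let ?l = "length la"
  have mono: "\<And>k. rr la (Suc k) \<le> rr la k" using y by (auto simp: young_rr)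
  define NR where "NR = {..<?l} - RemIdx la"
  define NA where "NA = {..?l} - AddIdx la"
  have AS: "AddIdx la \<subseteq> {..?l}" by (auto simp: AddIdx_def)
  have RS: "RemIdx la \<subseteq> {..<?l}" by (auto simp: RemIdx_def)
  have NRc: "NR = {j. j < ?l \<and> rr la (Suc j) = rr la j}"
  proof (rule set_eqI)
    fix x
    show "x \<in> NR \<longleftrightarrow> x \<in> {j. j < ?l \<and> rr la (Suc j) = rr la j}"
    proof (cases "x < ?l")
      case True
      then have "rr la x = la ! x" by (simp add: rr_def)
      then show ?thesis unfolding NR_def RemIdx_def using mono[of x] True by auto
    qed (auto simp: NR_def)
  qed
  have NAc: "NA = Suc ` NR"
  proof
    show "NA \<subseteq> Suc ` NR"
    proof
      fix i assume "i \<in> NA"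
      then have i: "i \<le> ?l" "i \<noteq> 0" "\<not> rr la i < rr la (i - 1)" by (auto simp: NA_def AddIdx_def)
      then obtain j where j: "i = Suc j" by (cases i) auto
      then have "j \<in> NR" unfolding NRc using i mono[of j] by auto
      then show "i \<in> Suc ` NR" using j by blast
    qed
    show "Suc ` NR \<subseteq> NA"
      unfolding NRc NA_def AddIdx_def by auto
  qed
  have sA: "(\<Sum>i\<le>?l. W (int (rr la i) - int i)) = (\<Sum>i\<in>AddIdx la. W (int (rr la i) - int i)) + (\<Sum>i\<in>NA. W (int (rr la i) - int i))"
    unfolding NA_def sum.subset_diff[OF AS finite_atMost] by (rule add.commute)
  have sR: "(\<Sum>i<?l. W (int (la ! i) - int i - 1)) = (\<Sum>i\<in>RemIdx la. W (int (la ! i) - int i - 1)) + (\<Sum>i\<in>NR. W (int (la ! i) - int i - 1))"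
    unfolding NR_def sum.subset_diff[OF RS finite_lessThan] by (rule add.commute)
  have sN: "(\<Sum>i\<in>NA. W (int (rr la i) - int i)) = (\<Sum>i\<in>NR. W (int (la ! i) - int i - 1))"
  proof -
    have "(\<Sum>i\<in>NA. W (int (rr la i) - int i)) = (\<Sum>j\<in>NR. W (int (rr la (Suc j)) - int (Suc j)))"
      unfolding NAc by (rule sum.reindex[unfolded comp_def]) simp
    also have "\<dots> = (\<Sum>j\<in>NR. W (int (la ! j) - int j - 1))"
    proof (rule sum.cong[OF refl])
      fix j assume "j \<in> NR"
      then have "rr la (Suc j) = la ! j" "j < ?l" unfolding NRc by (auto simp: rr_def)
      then show "W (int (rr la (Suc j)) - int (Suc j)) = W (int (la ! j) - int j - 1)" by (simp add: algebra_simps)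
    qed
    finally show ?thesis .
  qed
  have sL: "(\<Sum>i\<le>?l. W (int (rr la i) - int i)) = W (- int ?l) + (\<Sum>i<?l. W (int (la ! i) - int i))"
  proof -
    have "(\<Sum>i\<le>?l. W (int (rr la i) - int i)) = (\<Sum>i<?l. W (int (rr la i) - int i)) + W (int (rr la ?l) - int ?l)"
      by (simp add: lessThan_Suc_atMost[symmetric])
    moreover have "(\<Sum>i<?l. W (int (rr la i) - int i)) = (\<Sum>i<?l. W (int (la ! i) - int i))"
      by (rule sum.cong) (auto simp: rr_def)
    ultimately show ?thesis by (simp add: rr_def)
  qed
  show ?thesis using sA sR sN sL by (simp add: sum_subtractf algebra_simps)
qed

lemma sum_odd: "(\<Sum>i<l. 2 * of_nat i + 1 :: complex) = of_nat l ^ 2"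
  by (induction l) (auto simp: power2_eq_square algebra_simps)

definition wt :: "complex \<Rightarrow> complex \<Rightarrow> (nat \<times> nat) set \<Rightarrow> complex" where
  "wt z z' S = cprod z S * cprod z' S"

lemma content_identity: assumes y: "young la"
  shows "(\<Sum>nu\<in>{nu. nearrow la nu}. wt z z' (boxes nu - boxes la))
       - (\<Sum>rho\<in>{rho. nearrow rho la}. wt z z' (boxes la - boxes rho)) = z * z' + 2 * of_nat (ysize la)"
proof -
  define W where "W c = (z + of_int c) * (z' + of_int c)" for c :: int
  have w1: "wt z z' {(a, b)} = W (int b - int a)" for a b by (simp add: wt_def cprod_def W_def)
  have A: "(\<Sum>nu\<in>{nu. nearrow la nu}. wt z z' (boxes nu - boxes la)) = (\<Sum>i\<in>AddIdx la. W (int (rr la i) - int i))"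
    unfolding up_sum[OF y] w1 by simp
  have R: "(\<Sum>rho\<in>{rho. nearrow rho la}. wt z z' (boxes la - boxes rho)) = (\<Sum>i\<in>RemIdx la. W (int (la ! i) - int i - 1))"
    unfolding down_sum[OF y] w1 by (simp add: algebra_simps)
  let ?l = "length la"
  have d: "W c - W (c - 1) = z + z' + 2 * of_int c - 1" for c unfolding W_def by (simp add: algebra_simps)
  have "(\<Sum>i<?l. W (int (la ! i) - int i) - W (int (la ! i) - int i - 1))
      = (\<Sum>i<?l. (z + z') + 2 * of_nat (la ! i) - (2 * of_nat i + 1))"
    by (rule sum.cong[OF refl], unfold d) (simp add: algebra_simps)
  also have "\<dots> = of_nat ?l * (z + z') + 2 * (\<Sum>i<?l. of_nat (la ! i)) - (\<Sum>i<?l. 2 * of_nat i + 1 :: complex)"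
    by (simp only: sum_subtractf sum.distrib sum_distrib_left) (simp add: algebra_simps)
  also have "\<dots> = of_nat ?l * (z + z') + 2 * (\<Sum>i<?l. of_nat (la ! i)) - of_nat ?l ^ 2"
    by (simp only: sum_odd)
  also have "(\<Sum>i<?l. of_nat (la ! i) :: complex) = of_nat (ysize la)"
    unfolding ysize_def sum_list_sum_nth atLeast0LessThan by simp
  finally have S: "(\<Sum>i<?l. W (int (la ! i) - int i) - W (int (la ! i) - int i - 1))
      = of_nat ?l * (z + z') + 2 * of_nat (ysize la) - of_nat ?l ^ 2" .
  have "W (- int ?l) = z * z' - of_nat ?l * (z + z') + of_nat ?l ^ 2"
    unfolding W_def by (simp add: algebra_simps power2_eq_square)
  then show ?thesis unfolding A R telescope[OF y] S by (simp add: algebra_simps)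
qed




lemma card_boxes_nearrow: "nearrow a b \<Longrightarrow> card (boxes b) = card (boxes a) + 1"
  by (simp add: nearrow_card)

lemma diamond_fwd:
  assumes n1: "nearrow la nu" and n2: "nearrow rho nu" and ne: "rho \<noteq> la"
  shows "boxes nu = boxes rho \<union> boxes la" "nearrow (meetl rho la) la" "nearrow (meetl rho la) rho"
proof -
  have yl: "young la" and yr: "young rho" and yn: "young nu" using n1 n2 by (auto simp: nearrow_def)
  have s1: "boxes la \<subseteq> boxes nu" and s2: "boxes rho \<subseteq> boxes nu" using n1 n2 by (auto simp: nearrow_def)
  have c1: "card (boxes nu) = card (boxes la) + 1" and c2: "card (boxes nu) = card (boxes rho) + 1"
    using n1 n2 by (auto simp: nearrow_card)
  have "\<not> boxes rho \<subseteq> boxes la"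
  proof
    assume "boxes rho \<subseteq> boxes la"
    then have "boxes rho = boxes la" using c1 c2 by (simp add: card_subset_eq)
    then show False using boxes_inj[OF yr yl] ne by simp
  qed
  then obtain x where x: "x \<in> boxes rho" "x \<notin> boxes la" by auto
  have "insert x (boxes la) \<subseteq> boxes rho \<union> boxes la" using x by auto
  moreover have "boxes rho \<union> boxes la \<subseteq> boxes nu" using s1 s2 by auto
  moreover have "card (insert x (boxes la)) = card (boxes nu)" using x c1 by simp
  ultimately show U: "boxes nu = boxes rho \<union> boxes la"
    by (metis card_subset_eq finite_boxes subset_antisym order_trans)
  have "card (boxes rho \<union> boxes la) + card (boxes rho \<inter> boxes la) = card (boxes rho) + card (boxes la)"
    using card_Un_Int[of "boxes rho" "boxes la"] by simp
  then have ci: "card (boxes rho \<inter> boxes la) + 1 = card (boxes la)" "card (boxes rho \<inter> boxes la) + 1 = card (boxes rho)"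
    using U c1 c2 by simp_all
  show "nearrow (meetl rho la) la" "nearrow (meetl rho la) rho"
    unfolding nearrow_card boxes_meetl[OF yr yl] using young_meetl[OF yr yl] yl yr ci by auto
qed

lemma diamond_bwd:
  assumes n1: "nearrow tau la" and n2: "nearrow tau rho" and ne: "rho \<noteq> la"
  shows "boxes tau = boxes rho \<inter> boxes la" "nearrow la (joinl rho la)" "nearrow rho (joinl rho la)"
proof -
  have yl: "young la" and yr: "young rho" and yt: "young tau" using n1 n2 by (auto simp: nearrow_def)
  have s1: "boxes tau \<subseteq> boxes la" and s2: "boxes tau \<subseteq> boxes rho" using n1 n2 by (auto simp: nearrow_def)
  have c1: "card (boxes la) = card (boxes tau) + 1" and c2: "card (boxes rho) = card (boxes tau) + 1"
    using n1 n2 by (auto simp: nearrow_card)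
  have I: "boxes tau \<subseteq> boxes rho \<inter> boxes la" using s1 s2 by auto
  show E: "boxes tau = boxes rho \<inter> boxes la"
  proof (rule ccontr)
    assume "boxes tau \<noteq> boxes rho \<inter> boxes la"
    then have "card (boxes tau) < card (boxes rho \<inter> boxes la)" using I
      by (meson finite_Int finite_boxes psubsetI psubset_card_mono)
    then have "card (boxes la) \<le> card (boxes rho \<inter> boxes la)" using c1 by simp
    then have "boxes rho \<inter> boxes la = boxes la" by (intro card_seteq) auto
    then have "boxes la \<subseteq> boxes rho" by auto
    then have "boxes la = boxes rho" using c1 c2 by (simp add: card_subset_eq)
    then show False using boxes_inj[OF yl yr] ne by simp
  qed
  have "card (boxes rho \<union> boxes la) + card (boxes rho \<inter> boxes la) = card (boxes rho) + card (boxes la)"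
    using card_Un_Int[of "boxes rho" "boxes la"] by simp
  then have cu: "card (boxes rho \<union> boxes la) = card (boxes la) + 1" "card (boxes rho \<union> boxes la) = card (boxes rho) + 1"
    using E c1 c2 by simp_all
  show "nearrow la (joinl rho la)" "nearrow rho (joinl rho la)"
    unfolding nearrow_card boxes_joinl[OF yr yl] using young_joinl[OF yr yl] yl yr cu by auto
qed

lemma finite_up_ne: "finite {rho. nearrow rho nu \<and> rho \<noteq> la}"
  by (rule finite_subset[OF _ finite_down[of nu]]) auto

lemma finite_up_ne2: "finite {rho. nearrow tau rho \<and> rho \<noteq> la}"
  by (rule finite_subset[OF _ finite_up[of tau]]) auto

lemma diamond_sum:
  assumes y: "young la"
  shows "(\<Sum>nu\<in>{nu. nearrow la nu}. \<Sum>rho\<in>{rho. nearrow rho nu \<and> rho \<noteq> la}. F (boxes nu - boxes la) rho)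
       = (\<Sum>tau\<in>{tau. nearrow tau la}. \<Sum>rho\<in>{rho. nearrow tau rho \<and> rho \<noteq> la}. F (boxes rho - boxes tau) rho)"
proof -
  let ?P1 = "SIGMA nu:{nu. nearrow la nu}. {rho. nearrow rho nu \<and> rho \<noteq> la}"
  let ?P2 = "SIGMA tau:{tau. nearrow tau la}. {rho. nearrow tau rho \<and> rho \<noteq> la}"
  have "(\<Sum>nu\<in>{nu. nearrow la nu}. \<Sum>rho\<in>{rho. nearrow rho nu \<and> rho \<noteq> la}. F (boxes nu - boxes la) rho)
      = (\<Sum>(nu, rho)\<in>?P1. F (boxes nu - boxes la) rho)"
    by (rule sum.Sigma) (auto simp: finite_up finite_up_ne)
  also have "\<dots> = (\<Sum>(tau, rho)\<in>?P2. F (boxes rho - boxes tau) rho)"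
  proof (rule sum.reindex_bij_witness[where j = "\<lambda>(nu, rho). (meetl rho la, rho)" and i = "\<lambda>(tau, rho). (joinl rho la, rho)"])
    fix a assume a: "a \<in> ?P1"
    obtain nu rho where ar: "a = (nu, rho)" by (cases a)
    have n1: "nearrow la nu" and n2: "nearrow rho nu" and ne: "rho \<noteq> la" using a ar by auto
    note D = diamond_fwd[OF n1 n2 ne]
    have yl: "young la" and yr: "young rho" and yn: "young nu" using n1 n2 by (auto simp: nearrow_def)
    have "joinl rho la = nu" using boxes_inj[OF young_joinl[OF yr yl] yn] boxes_joinl[OF yr yl] D(1) by simp
    then show "(\<lambda>(tau, rho). (joinl rho la, rho)) ((\<lambda>(nu, rho). (meetl rho la, rho)) a) = a" using ar by simp
    show "(\<lambda>(nu, rho). (meetl rho la, rho)) a \<in> ?P2" using ar D(2,3) ne by simp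
    have "boxes rho - boxes (meetl rho la) = boxes nu - boxes la"
      unfolding boxes_meetl[OF yr yl] D(1) by blast
    then show "(\<lambda>(tau, rho). F (boxes rho - boxes tau) rho) ((\<lambda>(nu, rho). (meetl rho la, rho)) a)
        = (\<lambda>(nu, rho). F (boxes nu - boxes la) rho) a" using ar by simp
  next
    fix b assume b: "b \<in> ?P2"
    obtain tau rho where br: "b = (tau, rho)" by (cases b)
    have n1: "nearrow tau la" and n2: "nearrow tau rho" and ne: "rho \<noteq> la" using b br by auto
    note D = diamond_bwd[OF n1 n2 ne]
    have yl: "young la" and yr: "young rho" and yt: "young tau" using n1 n2 by (auto simp: nearrow_def)
    have "meetl rho la = tau" using boxes_inj[OF young_meetl[OF yr yl] yt] boxes_meetl[OF yr yl] D(1) by simp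
    then show "(\<lambda>(nu, rho). (meetl rho la, rho)) ((\<lambda>(tau, rho). (joinl rho la, rho)) b) = b" using br by simp
    show "(\<lambda>(tau, rho). (joinl rho la, rho)) b \<in> ?P1" using br D(2,3) ne by simp
  qed
  also have "\<dots> = (\<Sum>tau\<in>{tau. nearrow tau la}. \<Sum>rho\<in>{rho. nearrow tau rho \<and> rho \<noteq> la}. F (boxes rho - boxes tau) rho)"
    by (rule sum.Sigma[symmetric]) (auto simp: finite_down finite_up_ne2)
  finally show ?thesis .
qed




definition Lsum :: "complex \<Rightarrow> complex \<Rightarrow> nat list \<Rightarrow> nat list \<Rightarrow> complex" where
  "Lsum z z' mu la = (\<Sum>nu\<in>{nu. nearrow la nu}. wt z z' (boxes nu - boxes la) * of_nat (dimrel mu nu))"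

definition Rsum :: "complex \<Rightarrow> complex \<Rightarrow> nat list \<Rightarrow> nat list \<Rightarrow> complex" where
  "Rsum z z' mu la = (\<Sum>mu'\<in>{mu'. nearrow mu' mu}. wt z z' (boxes mu - boxes mu') * of_nat (dimrel mu' la))"

definition Gf :: "complex \<Rightarrow> complex \<Rightarrow> nat \<Rightarrow> nat \<Rightarrow> complex" where
  "Gf z z' m n = of_nat (n + 1 - m) * (z * z' + of_nat (n + m))"

lemma Rsum_rec: assumes y: "young la" "ysize mu \<le> ysize la"
  shows "(\<Sum>tau\<in>{tau. nearrow tau la}. Rsum z z' mu tau) = Rsum z z' mu la"
proof -
  have "(\<Sum>tau\<in>{tau. nearrow tau la}. Rsum z z' mu tau)
      = (\<Sum>mu'\<in>{mu'. nearrow mu' mu}. wt z z' (boxes mu - boxes mu') * (\<Sum>tau\<in>{tau. nearrow tau la}. of_nat (dimrel mu' tau)))"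
    unfolding Rsum_def sum_distrib_left by (rule sum.swap)
  also have "\<dots> = Rsum z z' mu la"
    unfolding Rsum_def
  proof (rule sum.cong[OF refl])
    fix mu' assume "mu' \<in> {mu'. nearrow mu' mu}"
    then have "ysize mu' < ysize la" using y by (auto simp: nearrow_def)
    then have "dimrel mu' la = (\<Sum>tau\<in>{tau. nearrow tau la}. dimrel mu' tau)" by (rule dimrel_rec[OF y(1)])
    then show "wt z z' (boxes mu - boxes mu') * (\<Sum>tau\<in>{tau. nearrow tau la}. of_nat (dimrel mu' tau)) =
         wt z z' (boxes mu - boxes mu') * of_nat (dimrel mu' la)" by simp
  qed
  finally show ?thesis .
qed

lemma key:
  assumes ymu: "young mu"
  shows "young la \<Longrightarrow> Lsum z z' mu la = Gf z z' (ysize mu) (ysize la) * of_nat (dimrel mu la) + Rsum z z' mu la"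
proof (induction "ysize la" arbitrary: la rule: less_induct)
  case less
  let ?m = "ysize mu" and ?n = "ysize la"
  have y: "young la" by fact
  show ?case
  proof (cases "?n + 1 < ?m")
    case True
    have "Lsum z z' mu la = 0" unfolding Lsum_def
    proof (rule sum.neutral, intro ballI)
      fix nu assume "nu \<in> {nu. nearrow la nu}"
      then have "ysize nu = ?n + 1" by (auto simp: nearrow_def)
      then have "dimrel mu nu = 0" using True by (intro dimrel_zero) auto
      then show "wt z z' (boxes nu - boxes la) * of_nat (dimrel mu nu) = 0" by simp
    qed
    moreover have "Rsum z z' mu la = 0" unfolding Rsum_def
    proof (rule sum.neutral, intro ballI)
      fix nu assume "nu \<in> {nu. nearrow nu mu}"
      then have "ysize nu + 1 = ?m" by (auto simp: nearrow_def)
      then have "dimrel nu la = 0" using True by (intro dimrel_zero) auto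
      then show "wt z z' (boxes mu - boxes nu) * of_nat (dimrel nu la) = 0" by simp
    qed
    moreover have "Gf z z' ?m ?n = 0" using True by (simp add: Gf_def)
    ultimately show ?thesis by simp
  next
    case False
    show ?thesis
    proof (cases "?n + 1 = ?m")
      case True
      have "Lsum z z' mu la = (\<Sum>nu\<in>{nu. nearrow la nu}. if nu = mu then wt z z' (boxes mu - boxes la) else 0)"
        unfolding Lsum_def
      proof (rule sum.cong[OF refl])
        fix nu assume "nu \<in> {nu. nearrow la nu}"
        then have "ysize nu = ?m" using True by (auto simp: nearrow_def)
        then show "wt z z' (boxes nu - boxes la) * of_nat (dimrel mu nu) = (if nu = mu then wt z z' (boxes mu - boxes la) else 0)"
          using dimrel_self[OF ymu] dimrel_zero[of nu mu] by auto
      qed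
      also have "\<dots> = (if nearrow la mu then wt z z' (boxes mu - boxes la) else 0)"
        by (simp add: sum.delta' finite_up)
      finally have L: "Lsum z z' mu la = (if nearrow la mu then wt z z' (boxes mu - boxes la) else 0)" .
      have "Rsum z z' mu la = (\<Sum>mu'\<in>{mu'. nearrow mu' mu}. if mu' = la then wt z z' (boxes mu - boxes la) else 0)"
        unfolding Rsum_def
      proof (rule sum.cong[OF refl])
        fix mu' assume "mu' \<in> {mu'. nearrow mu' mu}"
        then have "ysize mu' = ?n" "young mu'" using True by (auto simp: nearrow_def)
        then show "wt z z' (boxes mu - boxes mu') * of_nat (dimrel mu' la) = (if mu' = la then wt z z' (boxes mu - boxes la) else 0)"
          using dimrel_self[of la] dimrel_zero[of la mu'] by auto
      qed
      also have "\<dots> = (if nearrow la mu then wt z z' (boxes mu - boxes la) else 0)"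
        by (simp add: sum.delta' finite_down)
      finally have R: "Rsum z z' mu la = (if nearrow la mu then wt z z' (boxes mu - boxes la) else 0)" .
      have "Gf z z' ?m ?n = 0" using True by (simp add: Gf_def)
      then show ?thesis using L R by simp
    next
      case False2: False
      then have nm: "?m \<le> ?n" using False by simp
      define d :: complex where "d = of_nat (dimrel mu la)"
      define A where "A = (\<Sum>nu\<in>{nu. nearrow la nu}. wt z z' (boxes nu - boxes la))"
      define R where "R = (\<Sum>tau\<in>{tau. nearrow tau la}. wt z z' (boxes la - boxes tau))"
      have AR: "A - R = z * z' + 2 * of_nat ?n" unfolding A_def R_def by (rule content_identity[OF y])
      have "Lsum z z' mu la = (\<Sum>nu\<in>{nu. nearrow la nu}. wt z z' (boxes nu - boxes la) *
               (d + (\<Sum>rho\<in>{rho. nearrow rho nu \<and> rho \<noteq> la}. of_nat (dimrel mu rho))))"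
        unfolding Lsum_def
      proof (rule sum.cong[OF refl])
        fix nu assume nu: "nu \<in> {nu. nearrow la nu}"
        then have yn: "young nu" and sz: "ysize nu = ?n + 1" by (auto simp: nearrow_def)
        have "dimrel mu nu = (\<Sum>rho\<in>{rho. nearrow rho nu}. dimrel mu rho)"
          by (rule dimrel_rec[OF yn]) (use sz nm in simp)
        also have "\<dots> = dimrel mu la + (\<Sum>rho\<in>{rho. nearrow rho nu} - {la}. dimrel mu rho)"
          by (rule sum.remove) (use nu finite_down in auto)
        also have "{rho. nearrow rho nu} - {la} = {rho. nearrow rho nu \<and> rho \<noteq> la}" by auto
        finally show "wt z z' (boxes nu - boxes la) * of_nat (dimrel mu nu) = wt z z' (boxes nu - boxes la) *
               (d + (\<Sum>rho\<in>{rho. nearrow rho nu \<and> rho \<noteq> la}. of_nat (dimrel mu rho)))"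
          by (simp add: d_def)
      qed
      also have "\<dots> = A * d + (\<Sum>nu\<in>{nu. nearrow la nu}. \<Sum>rho\<in>{rho. nearrow rho nu \<and> rho \<noteq> la}.
                       wt z z' (boxes nu - boxes la) * of_nat (dimrel mu rho))"
        by (simp add: A_def algebra_simps sum.distrib sum_distrib_left sum_distrib_right)
      also have "(\<Sum>nu\<in>{nu. nearrow la nu}. \<Sum>rho\<in>{rho. nearrow rho nu \<and> rho \<noteq> la}.
                       wt z z' (boxes nu - boxes la) * of_nat (dimrel mu rho))
          = (\<Sum>tau\<in>{tau. nearrow tau la}. \<Sum>rho\<in>{rho. nearrow tau rho \<and> rho \<noteq> la}.
                       wt z z' (boxes rho - boxes tau) * of_nat (dimrel mu rho))"
        by (rule diamond_sum[OF y])
      also have "\<dots> = (\<Sum>tau\<in>{tau. nearrow tau la}. Lsum z z' mu tau - wt z z' (boxes la - boxes tau) * d)"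
      proof (rule sum.cong[OF refl])
        fix tau assume tau: "tau \<in> {tau. nearrow tau la}"
        have "Lsum z z' mu tau = wt z z' (boxes la - boxes tau) * d +
           (\<Sum>rho\<in>{rho. nearrow tau rho} - {la}. wt z z' (boxes rho - boxes tau) * of_nat (dimrel mu rho))"
          unfolding Lsum_def d_def by (rule sum.remove) (use tau finite_up in auto)
        also have "{rho. nearrow tau rho} - {la} = {rho. nearrow tau rho \<and> rho \<noteq> la}" by auto
        finally show "(\<Sum>rho\<in>{rho. nearrow tau rho \<and> rho \<noteq> la}. wt z z' (boxes rho - boxes tau) * of_nat (dimrel mu rho))
            = Lsum z z' mu tau - wt z z' (boxes la - boxes tau) * d" by simp
      qed
      also have "\<dots> = (\<Sum>tau\<in>{tau. nearrow tau la}. Lsum z z' mu tau) - R * d"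
        by (simp add: R_def sum_subtractf sum_distrib_right)
      also have "(\<Sum>tau\<in>{tau. nearrow tau la}. Lsum z z' mu tau)
           = (\<Sum>tau\<in>{tau. nearrow tau la}. Gf z z' ?m (ysize tau) * of_nat (dimrel mu tau) + Rsum z z' mu tau)"
      proof (rule sum.cong[OF refl])
        fix tau assume tau: "tau \<in> {tau. nearrow tau la}"
        then have "ysize tau < ?n" "young tau" by (auto simp: nearrow_def)
        then show "Lsum z z' mu tau = Gf z z' ?m (ysize tau) * of_nat (dimrel mu tau) + Rsum z z' mu tau"
          using less.hyps by blast
      qed
      also have "\<dots> = (\<Sum>tau\<in>{tau. nearrow tau la}. Gf z z' ?m (?n - 1) * of_nat (dimrel mu tau)) + Rsum z z' mu la"
        unfolding sum.distrib Rsum_rec[OF y nm]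
        by (rule arg_cong2[where f = "(+)"], rule sum.cong[OF refl]) (auto simp: nearrow_def)
      also have "(\<Sum>tau\<in>{tau. nearrow tau la}. Gf z z' ?m (?n - 1) * of_nat (dimrel mu tau))
           = (if ?m < ?n then Gf z z' ?m (?n - 1) * d else 0)"
      proof (cases "?m < ?n")
        case True
        have "dimrel mu la = (\<Sum>tau\<in>{tau. nearrow tau la}. dimrel mu tau)" by (rule dimrel_rec[OF y True])
        then show ?thesis using True by (simp add: d_def sum_distrib_left)
      next
        case False
        have "(\<Sum>tau\<in>{tau. nearrow tau la}. Gf z z' ?m (?n - 1) * of_nat (dimrel mu tau)) = 0"
        proof (rule sum.neutral, intro ballI)
          fix tau assume "tau \<in> {tau. nearrow tau la}"
          then have "ysize tau + 1 = ?n" by (auto simp: nearrow_def)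
          then have "dimrel mu tau = 0" using False nm by (intro dimrel_zero) auto
          then show "Gf z z' ?m (?n - 1) * of_nat (dimrel mu tau) = 0" by simp
        qed
        then show ?thesis using False by simp
      qed
      finally have L: "Lsum z z' mu la = (A - R) * d + (if ?m < ?n then Gf z z' ?m (?n - 1) * d else 0) + Rsum z z' mu la"
        by (simp add: algebra_simps)
      have G: "Gf z z' ?m ?n = z * z' + 2 * of_nat ?n + (if ?m < ?n then Gf z z' ?m (?n - 1) else 0)"
      proof (cases "?m < ?n")
        case True
        then obtain k where k: "?n = ?m + k + 1" by (metis add.commute add_Suc_right less_iff_Suc_add plus_1_eq_Suc)
        show ?thesis unfolding Gf_def k using True k
          by (simp add: algebra_simps of_nat_diff)
      next
        case False
        then have "?n = ?m" using nm by simp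
        then show ?thesis by (simp add: Gf_def algebra_simps)
      qed
      show ?thesis unfolding L AR G by (simp add: d_def algebra_simps)
    qed
  qed
qed




lemma young_nil: "young []" by (simp add: young_def)

lemma ydim_pos: "young la \<Longrightarrow> 0 < ydim la"
proof (induction "ysize la" arbitrary: la rule: less_induct)
  case less
  show ?case
  proof (cases "la = []")
    case True
    then show ?thesis using dimrel_self[OF young_nil] by (simp add: ydim_def)
  next
    case False
    define i where "i = length la - 1"
    have il: "i < length la" using False by (simp add: i_def)
    have "i + 1 = length la" using False by (simp add: i_def)
    then have "rr la (i + 1) = 0" by (simp add: rr_beyond)
    then have iR: "i \<in> RemIdx la" using young_pos[OF less.prems il] il by (simp add: RemIdx_def)
    have n: "nearrow (reml la i) la" by (rule nearrow_reml[OF less.prems iR])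
    have yr: "young (reml la i)" and sz: "ysize (reml la i) < ysize la" using n by (auto simp: nearrow_def)
    have p: "0 < ydim (reml la i)" using less.hyps[OF sz yr] .
    have "ysize [] < ysize la" using sz by (simp add: ysize_def)
    then have "ydim la = (\<Sum>rho\<in>{rho. nearrow rho la}. ydim rho)"
      unfolding ydim_def by (rule dimrel_rec[OF less.prems])
    also have "\<dots> \<ge> ydim (reml la i)"
      by (rule member_le_sum) (use n finite_down in auto)
    finally show ?thesis using p by simp
  qed
qed

lemma zz_pos: assumes "admissible z z'" shows "\<exists>r::real. r > 0 \<and> z * z' = of_real r"
  using assms unfolding admissible_def
proof (elim disjE exE conjE)
  assume z: "z \<notin> \<real>" and z': "z' = cnj z"
  have "z \<noteq> 0" using z by auto
  then have "0 < (cmod z)^2" by simp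
  moreover have "z * z' = of_real ((cmod z)^2)" using z' complex_norm_square[of z] by simp
  ultimately show ?thesis by blast
next
  fix N :: int
  assume zr: "z \<in> \<real>" "z' \<in> \<real>" and b: "of_int N < Re z" "Re z < of_int N + 1" "of_int N < Re z'" "Re z' < of_int N + 1"
  have ez: "z = of_real (Re z)" "z' = of_real (Re z')" using zr by (auto simp: complex_is_Real_iff complex_eq_iff)
  have "0 < Re z * Re z'"
  proof (cases "N \<ge> 0")
    case True
    then have "0 < Re z" "0 < Re z'" using b by linarith+
    then show ?thesis by simp
  next
    case False
    then have "Re z < 0" "Re z' < 0" using b by linarith+
    then show ?thesis by (simp add: mult_neg_neg)
  qed
  moreover have "z * z' = of_real (Re z * Re z')" using ez by (metis of_real_mult)
  ultimately show ?thesis by blast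
qed

lemma denom_nz: assumes "admissible z z'" shows "z * z' + of_nat n \<noteq> 0"
proof -
  obtain r where r: "r > 0" "z * z' = of_real r" using zz_pos[OF assms] by blast
  then have "z * z' + of_nat n = of_real (r + real n)" by simp
  moreover have "r + real n > 0" using r by simp
  ultimately show ?thesis by (metis of_real_eq_0_iff less_irrefl)
qed

lemma falling_zero: "n < m \<Longrightarrow> falling n m = 0"
  unfolding falling_def by (rule prod_zero) (auto intro!: bexI[of _ n])

lemma falling_Suc: "falling n (Suc k) = falling n k * (of_nat n - of_nat k)"
  by (simp add: falling_def)

lemma inner_sum:
  assumes yn: "young nu" and sz: "ysize nu = n + 1"
  shows "(\<Sum>la'\<in>YD n. pdown nu la' * FS mu la') = falling n (ysize mu) * of_nat (dimrel mu nu) / of_nat (ydim nu)"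
proof -
  have "(\<Sum>la'\<in>YD n. pdown nu la' * FS mu la') = (\<Sum>la'\<in>{la'. nearrow la' nu}. falling n (ysize mu) * of_nat (dimrel mu la') / of_nat (ydim nu))"
  proof (rule sum.mono_neutral_cong_right)
    show "finite (YD n)" by (rule finite_YD)
    show "{la'. nearrow la' nu} \<subseteq> YD n" using sz by (auto simp: nearrow_def YD_def)
    show "\<forall>i\<in>YD n - {la'. nearrow la' nu}. pdown nu i * FS mu i = 0" by (simp add: pdown_def)
    fix x assume x: "x \<in> {la'. nearrow la' nu}"
    then have yx: "young x" and sx: "ysize x = n" using sz by (auto simp: nearrow_def)
    have "ydim x > 0" by (rule ydim_pos[OF yx])
    then show "pdown nu x * FS mu x = falling n (ysize mu) * of_nat (dimrel mu x) / of_nat (ydim nu)"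
      using x sx by (simp add: pdown_def FS_def)
  qed
  also have "\<dots> = falling n (ysize mu) * of_nat (\<Sum>la'\<in>{la'. nearrow la' nu}. dimrel mu la') / of_nat (ydim nu)"
    by (simp add: sum_divide_distrib sum_distrib_left)
  also have "\<dots> = falling n (ysize mu) * of_nat (dimrel mu nu) / of_nat (ydim nu)"
  proof (cases "ysize mu < ysize nu")
    case True
    then show ?thesis using dimrel_rec[OF yn True] by simp
  next
    case False
    then have "falling n (ysize mu) = 0" using sz by (intro falling_zero) simp
    then show ?thesis by simp
  qed
  finally show ?thesis .
qed

theorem lemma5p2:
  fixes z z' :: complex and mu la :: "nat list" and n :: nat
  assumes "admissible z z'"
    and "young mu"
    and "n \<ge> 1"
    and "la \<in> YD n"
  shows "Top z z' n (FS mu) la - FS mu la =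
     - (of_nat (ysize mu) * (of_nat (ysize mu) - 1 + z * z')) / ((of_nat n + 1) * (z * z' + of_nat n)) * FS mu la
     + (of_nat n + 1 - of_nat (ysize mu)) / ((of_nat n + 1) * (z * z' + of_nat n)) *
       (\<Sum>mu'\<in>{mu'. nearrow mu' mu}.
          cprod z (boxes mu - boxes mu') * cprod z' (boxes mu - boxes mu') * FS mu' la)"
proof -
  have y: "young la" and szl: "ysize la = n" using assms(4) by (auto simp: YD_def)
  let ?m = "ysize mu"
  define Dl :: complex where "Dl = of_nat (ydim la)"
  define c :: complex where "c = (of_nat n + 1) * (z * z' + of_nat n)"
  define F where "F = falling n ?m"
  define F1 where "F1 = falling n (?m - 1)"
  have Dl0: "Dl \<noteq> 0" using ydim_pos[OF y] by (simp add: Dl_def)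
  have zn: "z * z' + of_nat n \<noteq> 0" by (rule denom_nz[OF assms(1)])
  have "(of_nat (n + 1) :: complex) \<noteq> 0" by (simp only: of_nat_eq_0_iff)
  then have n1: "(of_nat n + 1 :: complex) \<noteq> 0" by (simp add: add.commute)
  have c0: "c \<noteq> 0" using zn n1 by (simp add: c_def)
  have "Top z z' n (FS mu) la = (\<Sum>nu\<in>{nu. nearrow la nu}. pup z z' la nu * (\<Sum>la'\<in>YD n. pdown nu la' * FS mu la'))"
    unfolding Top_def
  proof (rule sum.mono_neutral_cong_right)
    show "finite (YD (n + 1))" by (rule finite_YD)
    show "{nu. nearrow la nu} \<subseteq> YD (n + 1)" using szl by (auto simp: nearrow_def YD_def)
    show "\<forall>i\<in>YD (n + 1) - {nu. nearrow la nu}. pup z z' la i * (\<Sum>la'\<in>YD n. pdown i la' * FS mu la') = 0"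
      by (simp add: pup_def)
  qed simp
  also have "\<dots> = (\<Sum>nu\<in>{nu. nearrow la nu}. F / (c * Dl) * (wt z z' (boxes nu - boxes la) * of_nat (dimrel mu nu)))"
  proof (rule sum.cong[OF refl])
    fix nu assume nu: "nu \<in> {nu. nearrow la nu}"
    then have yn: "young nu" and sz: "ysize nu = n + 1" using szl by (auto simp: nearrow_def)
    have Dn: "of_nat (ydim nu) \<noteq> (0::complex)" using ydim_pos[OF yn] by simp
    show "pup z z' la nu * (\<Sum>la'\<in>YD n. pdown nu la' * FS mu la') = F / (c * Dl) * (wt z z' (boxes nu - boxes la) * of_nat (dimrel mu nu))"
      unfolding inner_sum[OF yn sz] using nu Dn Dl0 zn szl
      by (simp add: pup_def wt_def F_def c_def Dl_def field_simps)
  qed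
  also have "\<dots> = F / (c * Dl) * Lsum z z' mu la"
    by (simp add: Lsum_def sum_distrib_left)
  also have "\<dots> = F / (c * Dl) * (Gf z z' ?m n * of_nat (dimrel mu la) + Rsum z z' mu la)"
    using key[OF assms(2) y] szl by simp
  finally have T: "Top z z' n (FS mu) la = F / (c * Dl) * (Gf z z' ?m n * of_nat (dimrel mu la) + Rsum z z' mu la)" .
  have FS1: "FS mu la = F * of_nat (dimrel mu la) / Dl" by (simp add: FS_def F_def Dl_def szl)
  have S: "(\<Sum>mu'\<in>{mu'. nearrow mu' mu}. cprod z (boxes mu - boxes mu') * cprod z' (boxes mu - boxes mu') * FS mu' la)
      = F1 / Dl * Rsum z z' mu la"
    unfolding Rsum_def sum_distrib_left
  proof (rule sum.cong[OF refl])
    fix mu' assume "mu' \<in> {mu'. nearrow mu' mu}"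
    then have "ysize mu' = ?m - 1" by (auto simp: nearrow_def)
    then show "cprod z (boxes mu - boxes mu') * cprod z' (boxes mu - boxes mu') * FS mu' la =
         F1 / Dl * (wt z z' (boxes mu - boxes mu') * of_nat (dimrel mu' la))"
      by (simp add: FS_def F1_def Dl_def szl wt_def)
  qed
  have a: "F * Gf z z' ?m n - c * F = - (of_nat ?m * (of_nat ?m - 1 + z * z')) * F"
  proof (cases "?m \<le> n")
    case True
    then obtain k where k: "n = ?m + k" using le_Suc_ex by blast
    show ?thesis unfolding Gf_def c_def k by (simp add: algebra_simps)
  next
    case False
    then have "F = 0" unfolding F_def by (intro falling_zero) simp
    then show ?thesis by simp
  qed
  have b: "F * Rsum z z' mu la = (of_nat n + 1 - of_nat ?m) * F1 * Rsum z z' mu la"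
  proof (cases "?m = 0")
    case True
    then have "{mu'. nearrow mu' mu} = {}" by (auto simp: nearrow_def)
    then show ?thesis by (simp add: Rsum_def)
  next
    case False
    then obtain k where k: "?m = Suc k" by (cases ?m) auto
    show ?thesis unfolding F_def F1_def k falling_Suc by (simp add: algebra_simps)
  qed
  define d :: complex where "d = of_nat (dimrel mu la)"
  define Rs where "Rs = Rsum z z' mu la"
  define G where "G = Gf z z' ?m n"
  define M :: complex where "M = - (of_nat ?m * (of_nat ?m - 1 + z * z'))"
  define K :: complex where "K = of_nat n + 1 - of_nat ?m"
  have cc: "(of_nat n + 1) * (z * z' + of_nat n) = c" by (simp add: c_def)
  have "F / (c * Dl) * (G * d + Rs) - F * d / Dl = ((F * G - c * F) * d + F * Rs) / (c * Dl)"
    using c0 Dl0 by (simp add: field_simps)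
  also have "\<dots> = (M * F * d + K * F1 * Rs) / (c * Dl)"
    using a b unfolding M_def K_def G_def Rs_def by simp
  also have "\<dots> = M / c * (F * d / Dl) + K / c * (F1 / Dl * Rs)"
    using c0 Dl0 by (simp add: field_simps)
  finally have fin: "F / (c * Dl) * (G * d + Rs) - F * d / Dl = M / c * (F * d / Dl) + K / c * (F1 / Dl * Rs)" .
  show ?thesis
    unfolding T FS1 S cc using fin unfolding M_def K_def G_def Rs_def d_def by simp
qed


end
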